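(* Let $T>0$, $\alpha>0$, $C_{\alpha,T}=\frac{\alpha}{e^{\alpha T}-1}$, and let $\mathcal{G}_\theta$ be a neural operator (defined in the context) which is assumed to be an exact map from boundary input to boundary output of the closed-loop PDE, i.e. $Y(t)=\mathcal{G}_\theta(U)(t)$ for all $t\in[0,T]$. Assume $U:[0,T]\to\mathbb{R}$ is differentiable, $P,Q$ are differentiable, each activation $\sigma_l$ is a differentiable componentwise map, each kernel $\kappa^{(l)}(t,s)$ and bias $b_l(t)$ is differentiable in $t$ with differentiation under the integral sign permitted, and $\phi:[0,T]\times\mathbb{R}\to\mathbb{R}$ is continuously differentiable. Then: (a) $t\mapsto \mathcal{G}_\theta(U)(t)$ is differentiable and $$\frac{d\mathcal{G}_\theta(U)(t)}{dt}=\Lambda_\theta(t)\,\dot U(t)+\mu_\theta(t),$$ where $$\Lambda_\theta(t)=DQ(v_L(t))\,\Big[\mathrm{Diag}(\sigma_L')W_{L-1}\,\mathrm{Diag}(\sigma_{L-1}')W_{L-2}\cdots\mathrm{Diag}(\sigma_1')W_0\Big]\,DP(U(t)),$$ $$\mu_\theta(t)=DQ(v_L(t))\,\mathrm{Diag}(\sigma_L')\sum_{i=0}^{L-1}\Big[\prod_{j=1}^{i}W_{L-j}\,\mathrm{Diag}(\sigma_{L-j}')\Big]\Big(\int_0^T\frac{\partial\kappa^{(L-1-i)}(t,s)}{\partial t}v_{L-1-i}(s)\,ds+\frac{db_{L-1-i}(t)}{dt}\Big),$$ the product $\prod_{j=1}^{i}$ being ordered left to right in increasing $j$ and equal to the identity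 when $i=0$, and $\sigma_l'$ denoting the vector of derivatives of $\sigma_l$ evaluated at the pre-activation $W_{l-1}v_{l-1}(t)+\int_0^T\kappa^{(l-1)}(t,s)v_{l-1}(s)ds+b_{l-1}(t)$. (b) If for all $t\in[0,T]$ $$\partial_Y\phi(t,\mathcal{G}_\theta(U)(t))\,\frac{d\mathcal{G}_\theta(U)(t)}{dt}+\partial_t\phi(t,\mathcal{G}_\theta(U)(t))+\alpha\,\phi(t,\mathcal{G}_\theta(U)(t))+C_{\alpha,T}\,\phi(0,U(0))\le 0,$$ then the output $Y=\mathcal{G}_\theta(U)$ is boundary feasible over $[0,T]$ within the sublevel set of $\phi$: there exists $t_0\in[0,T]$ such that $\phi(t,Y(t))\le 0$ for all $t\in[t_0,T]$.
   Context: Setting: a closed-loop PDE with state $u:[0,1]^n\times[0,T]\to\mathcal{S}\subseteq\mathbb{R}$, Dirichlet boundary input $U(t)=u(\mathbf{1},t)$, constant initial condition $u(x,0)\equiv U(0)$ (so $Y(0)=U(0)$), and boundary output $Y(t)=u(\mathbf{0},t)$. Neural operator: $\mathcal{G}_\theta$ maps functions $U:[0,T]\to\mathcal{S}$ to functions $Y:[0,T]\to\mathcal{S}$ by $v_0(t)=P(U(t))$ with $P:\mathcal{S}\to\mathbb{R}^{d_{v_0}}$; $v_{l+1}(t)=\sigma_{l+1}\big(W_l v_l(t)+\int_0^T\kappa^{(l)}(t,s)v_l(s)\,ds+b_l(t)\big)$ for $l=0,\dots,L-1$, where $\sigma_{l+1}:\mathbb{R}^{d_{v_{l+1}}}\to\mathbb{R}^{d_{v_{l+1}}}$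 is an activation applied componentwise, $W_l\in\mathbb{R}^{d_{v_{l+1}}\times d_{v_l}}$, $\kappa^{(l)}\in C([0,T]\times[0,T];\mathbb{R}^{d_{v_{l+1}}\times d_{v_l}})$, $b_l\in C([0,T];\mathbb{R}^{d_{v_{l+1}}})$; $\mathcal{G}_\theta(U)(t)=Q(v_L(t))$ with $Q:\mathbb{R}^{d_{v_L}}\to\mathcal{S}$. Here $DP$, $DQ$ denote Jacobians. A function $\phi(t,Y)$ used this way is called a boundary control barrier function (BCBF). *)

theory Defs
  imports "HOL-Analysis.Analysis"
begin

text \<open>Finite-dimensional vectors of dimension n are represented as functions
  nat \<Rightarrow> real whose components with index \<ge> n are (by masking) zero; matrices
  as nat \<Rightarrow> nat \<Rightarrow> real (row index, column index).\<close>

definition mv :: "nat \<Rightarrow> (nat \<Rightarrow> nat \<Rightarrow> real) \<Rightarrow> (nat \<Rightarrow> real) \<Rightarrow> nat \<Rightarrow> real" where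
  "mv n A x = (\<lambda>i. \<Sum>j<n. A i j * x j)"

definition dg :: "(nat \<Rightarrow> real) \<Rightarrow> (nat \<Rightarrow> real) \<Rightarrow> nat \<Rightarrow> real" where
  "dg s x = (\<lambda>i. s i * x i)"

definition mask :: "nat \<Rightarrow> (nat \<Rightarrow> real) \<Rightarrow> nat \<Rightarrow> real" where
  "mask n x = (\<lambda>i. if i < n then x i else 0)"

definition vnorm :: "nat \<Rightarrow> (nat \<Rightarrow> real) \<Rightarrow> real" where
  "vnorm n h = sqrt (\<Sum>i<n. (h i)\<^sup>2)"

definition has_grad :: "nat \<Rightarrow> ((nat \<Rightarrow> real) \<Rightarrow> real) \<Rightarrow> (nat \<Rightarrow> real) \<Rightarrow> (nat \<Rightarrow> real) \<Rightarrow> bool" where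
  "has_grad n f x g \<longleftrightarrow>
     (\<forall>e>0. \<exists>\<delta>>0. \<forall>h. (\<forall>i\<ge>n. h i = 0) \<and> vnorm n h < \<delta> \<longrightarrow>
        \<bar>f (\<lambda>i. x i + h i) - f x - (\<Sum>i<n. g i * h i)\<bar> \<le> e * vnorm n h)"

record nop =
  dims :: "nat \<Rightarrow> nat"
  nL :: nat
  Pm :: "real \<Rightarrow> nat \<Rightarrow> real"
  Qm :: "(nat \<Rightarrow> real) \<Rightarrow> real"
  sig :: "nat \<Rightarrow> real \<Rightarrow> real"
  Wm :: "nat \<Rightarrow> nat \<Rightarrow> nat \<Rightarrow> real"
  ker :: "nat \<Rightarrow> real \<Rightarrow> real \<Rightarrow> nat \<Rightarrow> nat \<Rightarrow> real"
  bias :: "nat \<Rightarrow> real \<Rightarrow> nat \<Rightarrow> real"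

primrec vl :: "nop \<Rightarrow> real \<Rightarrow> (real \<Rightarrow> real) \<Rightarrow> nat \<Rightarrow> real \<Rightarrow> nat \<Rightarrow> real" where
  "vl N T U 0 t = mask (dims N 0) (Pm N (U t))"
| "vl N T U (Suc l) t = mask (dims N (Suc l))
     (\<lambda>i. sig N (Suc l) (mv (dims N l) (Wm N l) (vl N T U l t) i
        + integral {0..T} (\<lambda>s. mv (dims N l) (ker N l t s) (vl N T U l s) i)
        + bias N l t i))"

definition pre :: "nop \<Rightarrow> real \<Rightarrow> (real \<Rightarrow> real) \<Rightarrow> nat \<Rightarrow> real \<Rightarrow> nat \<Rightarrow> real" where
  "pre N T U l t = (\<lambda>i. mv (dims N l) (Wm N l) (vl N T U l t) i
        + integral {0..T} (\<lambda>s. mv (dims N l) (ker N l t s) (vl N T U l s) i)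
        + bias N l t i)"

definition Gop :: "nop \<Rightarrow> real \<Rightarrow> (real \<Rightarrow> real) \<Rightarrow> real \<Rightarrow> real" where
  "Gop N T U t = Qm N (vl N T U (nL N) t)"

definition dsig :: "nop \<Rightarrow> (nat \<Rightarrow> real \<Rightarrow> real) \<Rightarrow> real \<Rightarrow> (real \<Rightarrow> real) \<Rightarrow> nat \<Rightarrow> real \<Rightarrow> nat \<Rightarrow> real" where
  "dsig N dsg T U l t = mask (dims N l) (\<lambda>i. dsg l (pre N T U (l - 1) t i))"

primrec lamv :: "nop \<Rightarrow> (nat \<Rightarrow> real \<Rightarrow> real) \<Rightarrow> (real \<Rightarrow> nat \<Rightarrow> real) \<Rightarrow> real \<Rightarrow> (real \<Rightarrow> real)
                  \<Rightarrow> nat \<Rightarrow> real \<Rightarrow> nat \<Rightarrow> real" where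
  "lamv N dsg DP T U 0 t = mask (dims N 0) (DP (U t))"
| "lamv N dsg DP T U (Suc l) t =
     dg (dsig N dsg T U (Suc l) t) (mv (dims N l) (Wm N l) (lamv N dsg DP T U l t))"

definition Lambda :: "nop \<Rightarrow> (nat \<Rightarrow> real \<Rightarrow> real) \<Rightarrow> (real \<Rightarrow> nat \<Rightarrow> real) \<Rightarrow> ((nat \<Rightarrow> real) \<Rightarrow> nat \<Rightarrow> real)
                       \<Rightarrow> real \<Rightarrow> (real \<Rightarrow> real) \<Rightarrow> real \<Rightarrow> real" where
  "Lambda N dsg DP DQ T U t =
     (\<Sum>i<dims N (nL N). DQ (vl N T U (nL N) t) i * lamv N dsg DP T U (nL N) t i)"

definition rterm :: "nop \<Rightarrow> (nat \<Rightarrow> real \<Rightarrow> real \<Rightarrow> nat \<Rightarrow> nat \<Rightarrow> real) \<Rightarrow> (nat \<Rightarrow> real \<Rightarrow> nat \<Rightarrow> real)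
                      \<Rightarrow> real \<Rightarrow> (real \<Rightarrow> real) \<Rightarrow> nat \<Rightarrow> real \<Rightarrow> nat \<Rightarrow> real" where
  "rterm N dker db T U k t = (\<lambda>i. integral {0..T} (\<lambda>s. mv (dims N k) (dker k t s) (vl N T U k s) i)
                                    + db k t i)"

text \<open>chain i x = [prod_(j=1..i) W_(L-j) Diag(sigma_(L-j)')] x, product ordered left to right
  in increasing j, identity for i = 0.\<close>
primrec chain :: "nop \<Rightarrow> (nat \<Rightarrow> real \<Rightarrow> real) \<Rightarrow> real \<Rightarrow> (real \<Rightarrow> real) \<Rightarrow> real \<Rightarrow> nat
                   \<Rightarrow> (nat \<Rightarrow> real) \<Rightarrow> nat \<Rightarrow> real" where
  "chain N dsg T U t 0 x = x"
| "chain N dsg T U t (Suc i) x =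
     chain N dsg T U t i
       (mv (dims N (nL N - Suc i)) (Wm N (nL N - Suc i)) (dg (dsig N dsg T U (nL N - Suc i) t) x))"

definition Mu :: "nop \<Rightarrow> (nat \<Rightarrow> real \<Rightarrow> real) \<Rightarrow> ((nat \<Rightarrow> real) \<Rightarrow> nat \<Rightarrow> real)
                   \<Rightarrow> (nat \<Rightarrow> real \<Rightarrow> real \<Rightarrow> nat \<Rightarrow> nat \<Rightarrow> real) \<Rightarrow> (nat \<Rightarrow> real \<Rightarrow> nat \<Rightarrow> real)
                   \<Rightarrow> real \<Rightarrow> (real \<Rightarrow> real) \<Rightarrow> real \<Rightarrow> real" where
  "Mu N dsg DQ dker db T U t =
     (let L = nL N;
          S = (\<lambda>k. \<Sum>i<L. chain N dsg T U t i (rterm N dker db T U (L - 1 - i) t) k)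
      in \<Sum>k<dims N L. DQ (vl N T U L t) k * dg (dsig N dsg T U L t) S k)"

end

theory Submission
  imports Defs "HOL-Analysis.Analysis"
begin


definition sgf :: "real \<Rightarrow> real" where "sgf x = x / sqrt (x\<^sup>2 + 1)"

lemma sqrt1_pos: "sqrt ((x::real)\<^sup>2 + 1) > 0"
  by (rule real_sqrt_gt_zero) (simp add: add_nonneg_pos)

lemma sgf_le1: "\<bar>sgf x\<bar> \<le> 1"
proof -
  have a: "\<bar>x\<bar> \<le> sqrt (x\<^sup>2 + 1)" by (rule real_le_rsqrt) simp
  have "\<bar>x / sqrt (x\<^sup>2 + 1)\<bar> = \<bar>x\<bar> / sqrt (x\<^sup>2 + 1)"
    using sqrt1_pos[of x] by (simp only: abs_divide abs_of_pos)
  also have "\<dots> \<le> 1" using a sqrt1_pos[of x] by (simp only: divide_le_eq_1_pos)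
  finally show ?thesis unfolding sgf_def .
qed

lemma half_bound: "(r::real) > 0 \<Longrightarrow> \<bar>z\<bar> \<le> 1 \<Longrightarrow> \<bar>(r/2) * z\<bar> \<le> r/2"
  by (simp add: abs_mult mult_left_le)

lemma sgf_low: "\<bar>x\<bar> - 1 \<le> x * sgf x"
proof -
  have sq: "sqrt (x\<^sup>2 + 1) > 0" by (rule sqrt1_pos)
  have "(\<bar>x\<bar> - 1) * sqrt (x\<^sup>2 + 1) \<le> x\<^sup>2"
  proof (cases "\<bar>x\<bar> \<le> 1")
    case True
    then have "(\<bar>x\<bar> - 1) * sqrt (x\<^sup>2 + 1) \<le> 0" using sq by (intro mult_nonpos_nonneg) auto
    then show ?thesis by (meson order_trans zero_le_power2)
  next
    case False
    have "sqrt (x\<^sup>2 + 1) \<le> \<bar>x\<bar> + 1"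
      by (rule real_le_lsqrt) (auto simp: power2_eq_square algebra_simps)
    then have "(\<bar>x\<bar> - 1) * sqrt (x\<^sup>2 + 1) \<le> (\<bar>x\<bar> - 1) * (\<bar>x\<bar> + 1)"
      using False by (intro mult_left_mono) auto
    also have "\<dots> \<le> x\<^sup>2" by (simp add: power2_eq_square algebra_simps)
    finally show ?thesis .
  qed
  then have "\<bar>x\<bar> - 1 \<le> x\<^sup>2 / sqrt (x\<^sup>2 + 1)" by (subst pos_le_divide_eq[OF sq])
  also have "x\<^sup>2 / sqrt (x\<^sup>2 + 1) = x * sgf x" unfolding sgf_def power2_eq_square by simp
  finally show ?thesis .
qed

lemma sgf_cont: "continuous_on UNIV sgf"
  unfolding sgf_def
  by (intro continuous_intros ballI) (metis sqrt1_pos order_less_irrefl)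

lemma ubp_L1:
  fixes q :: "nat \<Rightarrow> real \<Rightarrow> real" and a b :: real
  assumes ab: "a \<le> b"
    and cont: "\<And>n. continuous_on {a..b} (q n)"
    and bdd: "\<And>f. continuous_on {a..b} f \<Longrightarrow> \<exists>B. \<forall>n. \<bar>integral {a..b} (\<lambda>s. q n s * f s)\<bar> \<le> B"
  shows "\<exists>M. \<forall>n. integral {a..b} (\<lambda>s. \<bar>q n s\<bar>) \<le> M"
proof -
  define \<Lambda> where "\<Lambda> n (f::real \<Rightarrow>\<^sub>C real) = integral {a..b} (\<lambda>s. q n s * apply_bcontfun f s)" for n f
  define A where "A n = integral {a..b} (\<lambda>s. \<bar>q n s\<bar>)" for n
  have cf: "continuous_on {a..b} (apply_bcontfun f)" for f :: "real \<Rightarrow>\<^sub>C real" by simp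
  have intq: "(\<lambda>s. q n s * g s) integrable_on {a..b}" if "continuous_on {a..b} g" for n g
    by (intro integrable_continuous_interval continuous_intros cont that)
  have intaq: "(\<lambda>s. \<bar>q n s\<bar> * c) integrable_on {a..b}" for n c
    by (intro integrable_continuous_interval continuous_intros cont)
  have A0: "A n \<ge> 0" for n unfolding A_def
    by (intro integral_nonneg integrable_continuous_interval continuous_intros cont) auto
  have lin: "\<Lambda> n (f + h) = \<Lambda> n f + \<Lambda> n h" for n f h
    unfolding \<Lambda>_def by (simp add: distrib_left integral_add intq)
  have lip: "dist (\<Lambda> n f) (\<Lambda> n h) \<le> A n * dist f h" for n f h
  proof -
    have "\<Lambda> n f - \<Lambda> n h = integral {a..b} (\<lambda>s. q n s * (f s - h s))"
      unfolding \<Lambda>_def by (simp add: right_diff_distrib integral_diff intq)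
    also have "norm \<dots> \<le> integral {a..b} (\<lambda>s. \<bar>q n s\<bar> * dist f h)"
    proof (rule integral_norm_bound_integral)
      show "(\<lambda>s. q n s * (f s - h s)) integrable_on {a..b}"
        by (intro intq continuous_intros) auto
      show "(\<lambda>s. \<bar>q n s\<bar> * dist f h) integrable_on {a..b}" by (rule intaq)
      fix s assume "s \<in> {a..b}"
      have "\<bar>f s - h s\<bar> \<le> dist f h" using dist_bounded[of f s h] by (simp add: dist_real_def)
      then show "norm (q n s * (f s - h s)) \<le> \<bar>q n s\<bar> * dist f h"
        by (simp add: abs_mult mult_left_mono)
    qed
    also have "\<dots> = A n * dist f h" unfolding A_def by simp
    finally show ?thesis by (simp add: dist_real_def)
  qed
  have contL: "continuous_on UNIV (\<Lambda> n)" for n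
  proof (rule lipschitz_on_continuous_on)
    show "(A n)-lipschitz_on UNIV (\<Lambda> n)"
      by (rule lipschitz_onI) (use lip A0 in auto)
  qed
  define E where "E k = (\<Inter>n. \<Lambda> n -` {- real k..real k})" for k
  have memE: "f \<in> E k \<longleftrightarrow> (\<forall>n. \<bar>\<Lambda> n f\<bar> \<le> real k)" for f k
    unfolding E_def by (simp add: abs_le_iff) (meson minus_le_iff)
  have clE: "closed (E k)" for k
    unfolding E_def by (intro closed_INT ballI closed_vimage[OF closed_atLeastAtMost] contL)
  have covE: "(\<Union>k. E k) = UNIV"
  proof (rule set_eqI, rule iffI)
    fix f :: "real \<Rightarrow>\<^sub>C real"
    assume "f \<in> UNIV"
    obtain B where B: "\<forall>n. \<bar>\<Lambda> n f\<bar> \<le> B" using bdd[OF cf[of f]] unfolding \<Lambda>_def by blast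
    then have "f \<in> E (nat \<lceil>B\<rceil>)" unfolding memE by (auto intro: order_trans[OF _ real_nat_ceiling_ge])
    then show "f \<in> (\<Union>k. E k)" by blast
  qed simp
  obtain k where "interior (E k) \<noteq> {}"
  proof (rule ccontr)
    assume "\<not> thesis"
    then have "\<forall>k. euclidean interior_of E k = {}" using that by auto
    then have "euclidean interior_of \<Union>(range E) = {}"
      by (intro Baire_category_alt) (auto simp: completely_metrizable_space_euclidean clE closed_closedin[symmetric])
    then show False using covE by simp
  qed
  then obtain f0 where "f0 \<in> interior (E k)" by blast
  then obtain r where r: "r > 0" "ball f0 r \<subseteq> E k"
    using open_contains_ball_eq open_interior interior_subset by (metis subset_trans)
  have f0E: "f0 \<in> E k" using r by auto
  have "A n \<le> 4 * real k / r + (b - a)" for n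
  proof -
    define h where "h s = (r/2) * sgf (q n s)" for s
    have hc0: "continuous_on {a..b} (\<lambda>s. sgf (q n s))"
      by (rule continuous_on_compose2[OF sgf_cont cont]) auto
    have hc: "continuous_on (cbox a b) h" unfolding h_def cbox_interval
      by (intro continuous_intros hc0)
    obtain g :: "real \<Rightarrow>\<^sub>C real" where g: "\<And>x. x \<in> cbox a b \<Longrightarrow> g x = h x" "\<And>x. g x = h (clamp a b x)"
      by (rule continuous_on_cbox_bcontfunE[OF hc]) blast
    have hb: "\<bar>h y\<bar> \<le> r/2" for y
      unfolding h_def by (rule half_bound[OF r(1) sgf_le1])
    have "norm g \<le> r/2" by (rule norm_bound) (simp only: g(2) real_norm_def hb)
    then have "f0 + g \<in> ball f0 r" using r by (simp add: dist_norm)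
    then have "f0 + g \<in> E k" using r by auto
    then have "\<bar>\<Lambda> n (f0 + g)\<bar> \<le> k" "\<bar>\<Lambda> n f0\<bar> \<le> k" using f0E unfolding memE by auto
    then have L: "\<Lambda> n g \<le> 2 * k" using lin[of n f0 g] by linarith
    have "\<Lambda> n g = integral {a..b} (\<lambda>s. q n s * h s)"
      unfolding \<Lambda>_def by (rule integral_cong) (simp add: g(1) cbox_interval)
    also have "\<dots> \<ge> integral {a..b} (\<lambda>s. (r/2) * (\<bar>q n s\<bar> - 1))"
    proof (rule integral_le)
      show "(\<lambda>s. (r/2) * (\<bar>q n s\<bar> - 1)) integrable_on {a..b}"
        by (intro integrable_continuous_interval continuous_intros cont)
      show "(\<lambda>s. q n s * h s) integrable_on {a..b}" using hc by (intro intq) (simp add: cbox_interval)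
      fix s
      have "(r/2) * (\<bar>q n s\<bar> - 1) \<le> (r/2) * (q n s * sgf (q n s))"
        using r by (intro mult_left_mono sgf_low) auto
      then show "(r/2) * (\<bar>q n s\<bar> - 1) \<le> q n s * h s"
        unfolding h_def by (simp only: mult.left_commute)
    qed
    finally have "integral {a..b} (\<lambda>s. (r/2) * (\<bar>q n s\<bar> - 1)) \<le> 2 * k" using L by linarith
    moreover have "integral {a..b} (\<lambda>s. (r/2) * (\<bar>q n s\<bar> - 1)) = (r/2) * (A n - (b - a))"
    proof -
      have "integral {a..b} (\<lambda>s. (r/2) * (\<bar>q n s\<bar> - 1)) = (r/2) * integral {a..b} (\<lambda>s. \<bar>q n s\<bar> - 1)"
        by (rule integral_mult_right)
      also have "integral {a..b} (\<lambda>s. \<bar>q n s\<bar> - 1) = A n - (b - a)"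
        unfolding A_def using ab
        by (subst integral_diff) (auto intro!: integrable_continuous_interval continuous_intros cont)
      finally show ?thesis .
    qed
    ultimately have "(r/2) * (A n - (b - a)) \<le> 2 * k" by linarith
    then have "A n - (b - a) \<le> 4 * k / r" using r by (simp add: field_simps)
    then show ?thesis by simp
  qed
  then show ?thesis unfolding A_def by (intro exI allI)
qed

lemma lim_integrable:
  fixes q :: "nat \<Rightarrow> real \<Rightarrow> real" and g f :: "real \<Rightarrow> real" and a b :: real
  assumes ab: "a \<le> b"
    and cont: "\<And>n. continuous_on {a..b} (q n)"
    and lim: "\<And>s. s \<in> {a..b} \<Longrightarrow> (\<lambda>n. q n s) \<longlonglongrightarrow> g s"
    and bdd: "\<And>f. continuous_on {a..b} f \<Longrightarrow> \<exists>B. \<forall>n. \<bar>integral {a..b} (\<lambda>s. q n s * f s)\<bar> \<le> B"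
    and fc: "continuous_on {a..b} f"
  shows "(\<lambda>s. g s * f s) integrable_on {a..b}"
proof -
  define S where "S = {a..b}"
  obtain M where M: "\<And>n. integral S (\<lambda>s. \<bar>q n s\<bar>) \<le> M"
    using ubp_L1[OF ab cont bdd] unfolding S_def by blast
  obtain F where F: "\<And>s. s \<in> S \<Longrightarrow> \<bar>f s\<bar> \<le> F"
  proof -
    have "bounded (f ` S)" unfolding S_def
      by (intro compact_imp_bounded compact_continuous_image fc compact_Icc)
    then show ?thesis using that by (auto simp: bounded_iff)
  qed
  have F0: "F \<ge> 0" using F[of a] ab unfolding S_def by auto
  define h where "h n x = indicator S x *\<^sub>R (q n x * f x)" for n x
  define H where "H x = indicator S x *\<^sub>R (g x * f x)" for x
  have hm: "h n \<in> borel_measurable borel" for n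
    unfolding h_def S_def
    by (intro borel_measurable_continuous_on_indicator continuous_intros cont fc) auto
  have hlim: "(\<lambda>n. h n x) \<longlonglongrightarrow> H x" for x
  proof (cases "x \<in> S")
    case True
    then show ?thesis unfolding h_def H_def
      by (auto intro!: tendsto_intros lim simp: S_def)
  next
    case False
    then show ?thesis unfolding h_def H_def by simp
  qed
  have Hm: "H \<in> borel_measurable borel"
    by (rule borel_measurable_LIMSEQ_real[OF hlim hm]) 
  have nn: "(\<integral>\<^sup>+x. ennreal (norm (h n x)) \<partial>lborel) \<le> ennreal (M * F)" for n
  proof -
    have hi: "((\<lambda>x. \<bar>q n x * f x\<bar>) has_integral integral S (\<lambda>x. \<bar>q n x * f x\<bar>)) S"
      unfolding S_def
      by (intro integrable_integral integrable_continuous_interval continuous_intros cont fc)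
    have "(\<integral>\<^sup>+x. ennreal (norm (h n x)) \<partial>lborel)
        = (\<integral>\<^sup>+x. ennreal (\<bar>q n x * f x\<bar>) * indicator S x \<partial>lborel)"
      by (intro nn_integral_cong) (simp add: h_def split: split_indicator)
    also have "\<dots> = ennreal (integral S (\<lambda>x. \<bar>q n x * f x\<bar>))"
      by (rule nn_integral_has_integral_lebesgue'[OF _ hi]) simp
    also have "\<dots> \<le> ennreal (M * F)"
    proof (rule ennreal_leI)
      have "integral S (\<lambda>x. \<bar>q n x * f x\<bar>) \<le> integral S (\<lambda>x. \<bar>q n x\<bar> * F)"
      proof (rule integral_le)
        show "(\<lambda>x. \<bar>q n x * f x\<bar>) integrable_on S" using hi by blast
        show "(\<lambda>x. \<bar>q n x\<bar> * F) integrable_on S" unfolding S_def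
          by (intro integrable_continuous_interval continuous_intros cont)
        fix x assume "x \<in> S"
        then show "\<bar>q n x * f x\<bar> \<le> \<bar>q n x\<bar> * F"
          using F by (simp add: abs_mult mult_left_mono)
      qed
      also have "\<dots> = integral S (\<lambda>x. \<bar>q n x\<bar>) * F" by simp
      also have "\<dots> \<le> M * F" using M F0 by (simp add: mult_right_mono)
      finally show "integral S (\<lambda>x. \<bar>q n x * f x\<bar>) \<le> M * F" .
    qed
    finally show ?thesis .
  qed
  have "(\<integral>\<^sup>+x. ennreal (norm (H x)) \<partial>lborel) = (\<integral>\<^sup>+x. liminf (\<lambda>n. ennreal (norm (h n x))) \<partial>lborel)"
  proof (intro nn_integral_cong)
    fix x
    have "(\<lambda>n. ennreal (norm (h n x))) \<longlonglongrightarrow> ennreal (norm (H x))"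
      by (intro tendsto_ennrealI tendsto_norm hlim)
    then show "ennreal (norm (H x)) = liminf (\<lambda>n. ennreal (norm (h n x)))"
      using lim_imp_Liminf[OF sequentially_bot] by metis
  qed
  also have "\<dots> \<le> liminf (\<lambda>n. \<integral>\<^sup>+x. ennreal (norm (h n x)) \<partial>lborel)"
    by (rule nn_integral_liminf) (use hm in simp)
  also have "\<dots> \<le> liminf (\<lambda>n. ennreal (M * F))"
    by (intro Liminf_mono) (use nn in auto)
  also have "\<dots> = ennreal (M * F)" by (simp add: Liminf_const)
  also have "\<dots> < \<infinity>" by simp
  finally have fin: "(\<integral>\<^sup>+x. ennreal (norm (H x)) \<partial>lborel) < \<infinity>" .
  have "integrable lborel H"
    by (rule integrableI_bounded) (use Hm fin in simp_all)
  then have "set_integrable lborel S (\<lambda>s. g s * f s)"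
    unfolding set_integrable_def H_def .
  then show ?thesis unfolding S_def by (rule set_borel_integral_eq_integral(1)[unfolded S_def])
qed

lemma seq_quot:
  fixes F :: "real \<Rightarrow> real"
  assumes d: "(F has_real_derivative D) (at t within S)"
    and xs: "\<And>n. x n \<in> S" "\<And>n. x n \<noteq> t" and xl: "x \<longlonglongrightarrow> t"
  shows "(\<lambda>n. (F (x n) - F t) / (x n - t)) \<longlonglongrightarrow> D"
proof -
  have 1: "((\<lambda>y. (F y - F t) / (y - t)) \<longlongrightarrow> D) (at t within S)"
    using d has_field_derivative_iff by blast
  have 2: "filterlim x (at t within S) sequentially"
    unfolding filterlim_at using xs xl by auto
  show ?thesis using filterlim_compose[OF 1 2] .
qed

lemma approach_seq:
  fixes t T :: real
  assumes "T > 0" "t \<in> {0..T}"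
  obtains x :: "nat \<Rightarrow> real" where "\<And>n. x n \<in> {0..T}" "\<And>n. x n \<noteq> t" "x \<longlonglongrightarrow> t"
proof -
  define c where "c = (if t < T then T else 0)"
  have c: "c \<in> {0..T}" "c \<noteq> t" using assms unfolding c_def by auto
  define x where "x n = t + (c - t) / real (n + 2)" for n
  have "x n \<in> {0..T}" for n
  proof -
    define w where "w = 1 / real (n + 2)"
    have w: "0 < w" "w \<le> 1" unfolding w_def by auto
    have xe: "x n = t + (c - t) * w" unfolding x_def w_def by simp
    show ?thesis
    proof (cases "t < T")
      case True
      then have "c = T" unfolding c_def by simp
      moreover have "(T - t) * w \<le> T - t" using True w by (intro mult_left_le) auto
      moreover have "0 \<le> (T - t) * w" using True w by simp
      ultimately show ?thesis using xe assms(2) by auto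
    next
      case False
      then have "c = 0" "t = T" using assms(2) unfolding c_def by auto
      moreover have "T * w \<le> T" using assms(1) w by (intro mult_left_le) auto
      moreover have "0 \<le> T * w" using assms(1) w by simp
      ultimately show ?thesis using xe by auto
    qed
  qed
  moreover have "x n \<noteq> t" for n using c unfolding x_def by auto
  moreover have "x \<longlonglongrightarrow> t"
  proof -
    have "(\<lambda>n. (c - t) / real (n + 2)) \<longlonglongrightarrow> 0"
      by (intro tendsto_divide_0[OF tendsto_const] filterlim_at_top_imp_at_infinity
          filterlim_real_sequentially[THEN filterlim_compose] filterlim_add_const_nat_at_top)
    then show ?thesis unfolding x_def using tendsto_add[OF tendsto_const, of _ 0 sequentially t] by simp
  qed
  ultimately show ?thesis using that by blast
qed

lemma dker_integrable:
  fixes K dK :: "real \<Rightarrow> real \<Rightarrow> real" and T t :: real and f :: "real \<Rightarrow> real"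
  assumes T: "T > 0" and t: "t \<in> {0..T}"
    and Kc: "continuous_on ({0..T} \<times> {0..T}) (\<lambda>z. K (fst z) (snd z))"
    and Kd: "\<forall>t\<in>{0..T}. \<forall>s\<in>{0..T}. ((\<lambda>t. K t s) has_real_derivative dK t s) (at t within {0..T})"
    and Kl: "\<forall>f. continuous_on {0..T} f \<longrightarrow>
        (\<forall>t\<in>{0..T}. ((\<lambda>t. integral {0..T} (\<lambda>s. K t s * f s)) has_real_derivative
            integral {0..T} (\<lambda>s. dK t s * f s)) (at t within {0..T}))"
    and fc: "continuous_on {0..T} f"
  shows "(\<lambda>s. dK t s * f s) integrable_on {0..T}"
proof -
  obtain x where x: "\<And>n. x n \<in> {0..T}" "\<And>n. x n \<noteq> t" "x \<longlonglongrightarrow> t"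
    using approach_seq[OF T t] by blast
  define q where "q n s = (K (x n) s - K t s) / (x n - t)" for n s
  have xn: "x n - t \<noteq> 0" for n using x(2)[of n] by simp
  have Ksec: "continuous_on {0..T} (K \<tau>)" if "\<tau> \<in> {0..T}" for \<tau>
  proof -
    have "continuous_on {0..T} ((\<lambda>z. K (fst z) (snd z)) \<circ> (\<lambda>s. (\<tau>, s)))"
      by (intro continuous_on_compose continuous_intros continuous_on_subset[OF Kc]) (use that in auto)
    then show ?thesis by (simp add: o_def)
  qed
  have qc: "continuous_on {0..T} (q n)" for n
    unfolding q_def by (intro continuous_intros Ksec x(1) t) (use xn in auto)
  have qlim: "(\<lambda>n. q n s) \<longlonglongrightarrow> dK t s" if "s \<in> {0..T}" for s
    unfolding q_def using seq_quot[of "\<lambda>t. K t s", OF _ x] Kd t that by blast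
  have bdd: "\<exists>B. \<forall>n. \<bar>integral {0..T} (\<lambda>s. q n s * g s)\<bar> \<le> B" if gc: "continuous_on {0..T} g" for g
  proof -
    define I where "I \<tau> = integral {0..T} (\<lambda>s. K \<tau> s * g s)" for \<tau>
    have Ii: "(\<lambda>s. K \<tau> s * g s) integrable_on {0..T}" if "\<tau> \<in> {0..T}" for \<tau>
      by (intro integrable_continuous_interval continuous_intros Ksec gc that)
    have eq: "integral {0..T} (\<lambda>s. q n s * g s) = (I (x n) - I t) / (x n - t)" for n
    proof -
      have "integral {0..T} (\<lambda>s. q n s * g s) = integral {0..T} (\<lambda>s. (K (x n) s * g s - K t s * g s) / (x n - t))"
        unfolding q_def by (rule integral_cong) (simp add: field_simps xn)
      also have "\<dots> = integral {0..T} (\<lambda>s. K (x n) s * g s - K t s * g s) / (x n - t)"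
        by (rule integral_divide)
      also have "\<dots> = (I (x n) - I t) / (x n - t)"
        unfolding I_def by (subst integral_diff) (auto intro: Ii x(1) t)
      finally show ?thesis .
    qed
    have "(\<lambda>n. (I (x n) - I t) / (x n - t)) \<longlonglongrightarrow> integral {0..T} (\<lambda>s. dK t s * g s)"
      unfolding I_def by (rule seq_quot[OF _ x]) (use Kl gc t in blast)
    then have "Bseq (\<lambda>n. integral {0..T} (\<lambda>s. q n s * g s))"
      unfolding eq by (rule convergent_imp_Bseq[OF convergentI])
    then obtain B where "\<forall>n. norm (integral {0..T} (\<lambda>s. q n s * g s)) \<le> B"
      unfolding Bseq_def by (meson less_imp_le)
    then show ?thesis by auto
  qed
  show ?thesis
    by (rule lim_integrable[OF _ qc qlim bdd fc]) (use T in auto)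
qed



lemma partb:
  fixes G G' :: "real \<Rightarrow> real" and T \<alpha> :: real and phi phit phiy :: "real \<Rightarrow> real \<Rightarrow> real"
  assumes T: "T > 0" and al: "\<alpha> > 0"
    and Gd: "\<forall>t\<in>{0..T}. (G has_real_derivative G' t) (at t within {0..T})"
    and phi_diff: "\<forall>t\<in>{0..T}. \<forall>y. ((\<lambda>z. phi (fst z) (snd z)) has_derivative
        (\<lambda>h. phit t y * fst h + phiy t y * snd h)) (at (t, y) within {0..T} \<times> UNIV)"
    and hyp: "\<forall>t\<in>{0..T}. phiy t (G t) * G' t + phit t (G t) + \<alpha> * phi t (G t)
            + \<alpha> / (exp (\<alpha> * T) - 1) * phi 0 (G 0) \<le> 0"
  shows "phi T (G T) \<le> 0"
proof -
  define h where "h t = phi t (G t)" for t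
  define h' where "h' t = phit t (G t) + phiy t (G t) * G' t" for t
  have hd: "(h has_real_derivative h' t) (at t within {0..T})" if t: "t \<in> {0..T}" for t
  proof -
    have p: "((\<lambda>t. (t, G t)) has_derivative (\<lambda>x. (x, G' t * x))) (at t within {0..T})"
      using Gd t by (intro has_derivative_Pair has_derivative_ident)
        (auto simp: has_field_derivative_def)
    have q: "((\<lambda>z. phi (fst z) (snd z)) has_derivative (\<lambda>k. phit t (G t) * fst k + phiy t (G t) * snd k))
        (at (t, G t) within (\<lambda>t. (t, G t)) ` {0..T})"
      by (rule has_derivative_subset[OF phi_diff[rule_format, OF t]]) auto
    have "((\<lambda>z. phi (fst z) (snd z)) \<circ> (\<lambda>t. (t, G t)) has_derivative
          (\<lambda>k. phit t (G t) * fst k + phiy t (G t) * snd k) \<circ> (\<lambda>x. (x, G' t * x))) (at t within {0..T})"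
      by (rule diff_chain_within[OF p q])
    then have "(h has_derivative (\<lambda>x. phit t (G t) * x + phiy t (G t) * (G' t * x))) (at t within {0..T})"
      by (simp add: o_def h_def[abs_def])
    then show ?thesis
      by (rule has_derivative_imp_has_field_derivative) (simp add: h'_def algebra_simps)
  qed
  define C where "C = \<alpha> / (exp (\<alpha> * T) - 1)"
  define K where "K = C * h 0 / \<alpha>"
  define w where "w t = exp (\<alpha> * t) * h t + K * exp (\<alpha> * t)" for t
  define w' where "w' t = exp (\<alpha> * t) * (h' t + \<alpha> * h t + C * h 0)" for t
  have wd: "(w has_vector_derivative w' t) (at t within {0..T})" if t: "t \<in> {0..T}" for t
  proof -
    have "(w has_real_derivative (\<alpha> * exp (\<alpha> * t) * h t + exp (\<alpha> * t) * h' t + K * (\<alpha> * exp (\<alpha> * t))))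
        (at t within {0..T})"
      unfolding w_def
      by (auto intro!: derivative_eq_intros hd[OF t])
    moreover have "\<alpha> * exp (\<alpha> * t) * h t + exp (\<alpha> * t) * h' t + K * (\<alpha> * exp (\<alpha> * t)) = w' t"
      unfolding w'_def K_def using al by (simp add: field_simps)
    ultimately show ?thesis by (simp add: has_real_derivative_iff_has_vector_derivative)
  qed
  have "(w' has_integral (w T - w 0)) {0..T}"
    by (rule fundamental_theorem_of_calculus) (use T wd in auto)
  moreover have "((\<lambda>t. 0::real) has_integral 0) {0..T}" by simp
  moreover have "\<forall>t\<in>{0..T}. w' t \<le> 0"
  proof
    fix t assume t: "t \<in> {0..T}"
    have "h' t + \<alpha> * h t + C * h 0 \<le> 0" using hyp t unfolding h'_def h_def C_def by (simp add: algebra_simps)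
    then show "w' t \<le> 0" unfolding w'_def by (simp add: mult_nonneg_nonpos)
  qed
  ultimately have "w T - w 0 \<le> 0" by (metis has_integral_le)
  then have wT: "exp (\<alpha> * T) * h T + K * exp (\<alpha> * T) \<le> h 0 + K" unfolding w_def by simp
  have eT: "exp (\<alpha> * T) > 1" using T al by simp
  have aux: "E \<noteq> 0 \<Longrightarrow> a \<noteq> 0 \<Longrightarrow> (a / E * x / a) * E = x" for E a x :: real
    by (simp add: field_simps)
  have "K * (exp (\<alpha> * T) - 1) = h 0" unfolding K_def C_def using eT al by (intro aux) auto
  then have "exp (\<alpha> * T) * h T \<le> 0" using wT by (simp add: algebra_simps)
  then show ?thesis unfolding h_def by (simp add: mult_le_0_iff)
qed



lemma chain_grad:
  fixes v :: "real \<Rightarrow> nat \<Rightarrow> real" and v' G :: "nat \<Rightarrow> real" and Q :: "(nat \<Rightarrow> real) \<Rightarrow> real"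
  assumes vd: "\<And>j. j < n \<Longrightarrow> ((\<lambda>y. v y j) has_real_derivative v' j) (at t within S)"
    and msk: "\<And>y j. j \<ge> n \<Longrightarrow> v y j = 0"
    and grad: "has_grad n Q (v t) G"
  shows "((\<lambda>y. Q (v y)) has_real_derivative (\<Sum>j<n. G j * v' j)) (at t within S)"
proof -
  define R where "R y = Q (v y) - Q (v t) - (\<Sum>j<n. G j * (v y j - v t j))" for y
  have eq: "(Q (v y) - Q (v t)) / (y - t) = (\<Sum>j<n. G j * ((v y j - v t j) / (y - t))) + R y / (y - t)" for y
  proof -
    have "(\<Sum>j<n. G j * ((v y j - v t j) / (y - t))) = (\<Sum>j<n. G j * (v y j - v t j)) / (y - t)"
      by (simp add: sum_divide_distrib)
    then show ?thesis unfolding R_def by (simp add: diff_divide_distrib add_divide_distrib)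
  qed
  have quot: "((\<lambda>y. (v y j - v t j) / (y - t)) \<longlongrightarrow> v' j) (at t within S)" if "j < n" for j
    using vd[OF that] unfolding has_field_derivative_iff by simp
  have L1: "((\<lambda>y. \<Sum>j<n. G j * ((v y j - v t j) / (y - t))) \<longlongrightarrow> (\<Sum>j<n. G j * v' j)) (at t within S)"
    by (intro tendsto_sum tendsto_mult_left quot) auto
  define B where "B = (\<Sum>j<n. \<bar>v' j\<bar> + 1) + 1"
  have B: "B > 0" unfolding B_def by (simp add: sum_nonneg add_nonneg_pos)
  have L2: "((\<lambda>y. R y / (y - t)) \<longlongrightarrow> 0) (at t within S)"
  proof (rule tendstoI)
    fix \<epsilon> :: real assume \<epsilon>: "\<epsilon> > 0"
    define e where "e = \<epsilon> / (2 * B)"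
    have e: "e > 0" unfolding e_def using \<epsilon> B by simp
    obtain \<delta> where \<delta>: "\<delta> > 0" and hg: "\<And>h. (\<forall>i\<ge>n. h i = 0) \<and> vnorm n h < \<delta> \<Longrightarrow>
        \<bar>Q (\<lambda>i. v t i + h i) - Q (v t) - (\<Sum>i<n. G i * h i)\<bar> \<le> e * vnorm n h"
      using grad e unfolding has_grad_def by blast
    have cont: "((\<lambda>y. v y j) \<longlongrightarrow> v t j) (at t within S)" if "j < n" for j
      using DERIV_continuous[OF vd[OF that]] by (simp add: continuous_within)
    have "((\<lambda>y. \<Sum>j<n. \<bar>v y j - v t j\<bar>) \<longlongrightarrow> (\<Sum>j<n. \<bar>v t j - v t j\<bar>)) (at t within S)"
      by (intro tendsto_sum tendsto_rabs tendsto_diff cont tendsto_const) auto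
    then have ev1: "eventually (\<lambda>y. (\<Sum>j<n. \<bar>v y j - v t j\<bar>) < \<delta>) (at t within S)"
      using \<delta> by (auto dest: order_tendstoD(2))
    have "eventually (\<lambda>y. \<bar>(v y j - v t j) / (y - t)\<bar> < \<bar>v' j\<bar> + 1) (at t within S)" if "j < n" for j
      by (rule order_tendstoD(2)[OF tendsto_rabs[OF quot[OF that]]]) simp
    then have ev2: "eventually (\<lambda>y. \<forall>j\<in>{..<n}. \<bar>(v y j - v t j) / (y - t)\<bar> < \<bar>v' j\<bar> + 1) (at t within S)"
      by (intro eventually_ball_finite) auto
    show "eventually (\<lambda>y. dist (R y / (y - t)) 0 < \<epsilon>) (at t within S)"
      using ev1 ev2
    proof eventually_elim
      case (elim y)
      define h where "h i = v y i - v t i" for i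
      have hz: "\<forall>i\<ge>n. h i = 0" unfolding h_def using msk by simp
      have vn: "vnorm n h \<le> (\<Sum>j<n. \<bar>h j\<bar>)"
        unfolding vnorm_def using L2_set_le_sum_abs[of h "{..<n}"] by (simp add: L2_set_def)
      have "(\<lambda>i. v t i + h i) = v y" unfolding h_def by auto
      then have Rb: "\<bar>R y\<bar> \<le> e * vnorm n h"
        using hg[of h] hz vn elim(1) unfolding R_def h_def by simp
      have "\<bar>R y / (y - t)\<bar> \<le> e * B"
      proof (cases "y = t")
        case True then show ?thesis using e B by simp
      next
        case False
        then have yt: "\<bar>y - t\<bar> > 0" by simp
        have "\<bar>R y / (y - t)\<bar> = \<bar>R y\<bar> / \<bar>y - t\<bar>" by (simp add: abs_divide)
        also have "\<dots> \<le> e * (\<Sum>j<n. \<bar>h j\<bar>) / \<bar>y - t\<bar>"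
          using Rb vn e yt by (intro divide_right_mono) (auto intro: order_trans mult_left_mono)
        also have "\<dots> = e * (\<Sum>j<n. \<bar>h j / (y - t)\<bar>)"
          by (simp add: sum_divide_distrib[symmetric] abs_divide)
        also have "\<dots> \<le> e * (\<Sum>j<n. \<bar>v' j\<bar> + 1)"
          using elim(2) e unfolding h_def by (intro mult_left_mono sum_mono) (auto simp: less_imp_le)
        also have "\<dots> \<le> e * B"
          using e unfolding B_def by (intro mult_left_mono) auto
        finally show ?thesis .
      qed
      also have "e * B < \<epsilon>" unfolding e_def using B \<epsilon> by simp
      finally show ?case by (simp add: dist_real_def)
    qed
  qed
  have "((\<lambda>y. (Q (v y) - Q (v t)) / (y - t)) \<longlongrightarrow> (\<Sum>j<n. G j * v' j) + 0) (at t within S)"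
    unfolding eq by (intro tendsto_add L1 L2)
  then show ?thesis unfolding has_field_derivative_iff by simp
qed



primrec nu :: "nop \<Rightarrow> (nat \<Rightarrow> real \<Rightarrow> real) \<Rightarrow> (nat \<Rightarrow> real \<Rightarrow> real \<Rightarrow> nat \<Rightarrow> nat \<Rightarrow> real)
    \<Rightarrow> (nat \<Rightarrow> real \<Rightarrow> nat \<Rightarrow> real) \<Rightarrow> real \<Rightarrow> (real \<Rightarrow> real) \<Rightarrow> nat \<Rightarrow> real \<Rightarrow> nat \<Rightarrow> real" where
  "nu N dsg dker db T U 0 t = (\<lambda>j. 0)"
| "nu N dsg dker db T U (Suc l) t = dg (dsig N dsg T U (Suc l) t)
     (\<lambda>i. mv (dims N l) (Wm N l) (nu N dsg dker db T U l t) i + rterm N dker db T U l t i)"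

lemma ker_sec:
  fixes K :: "real \<Rightarrow> real \<Rightarrow> real"
  assumes Kc: "continuous_on ({0..T} \<times> {0..T}) (\<lambda>z. K (fst z) (snd z))" and \<tau>: "\<tau> \<in> {0..T}"
  shows "continuous_on {0..T} (K \<tau>)"
proof -
  have "continuous_on {0..T} ((\<lambda>z. K (fst z) (snd z)) \<circ> (\<lambda>s. (\<tau>, s)))"
    by (intro continuous_on_compose continuous_intros continuous_on_subset[OF Kc]) (use \<tau> in auto)
  then show ?thesis by (simp add: o_def)
qed

lemma layer_deriv:
  fixes N :: nop and T :: real and U U' :: "real \<Rightarrow> real"
    and DP :: "real \<Rightarrow> nat \<Rightarrow> real" and dsg :: "nat \<Rightarrow> real \<Rightarrow> real"
    and dker :: "nat \<Rightarrow> real \<Rightarrow> real \<Rightarrow> nat \<Rightarrow> nat \<Rightarrow> real"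
    and db :: "nat \<Rightarrow> real \<Rightarrow> nat \<Rightarrow> real"
  assumes T_pos: "T > 0"
    and U_diff: "\<forall>t\<in>{0..T}. (U has_real_derivative U' t) (at t within {0..T})"
    and P_diff: "\<forall>y i. i < dims N 0 \<longrightarrow> ((\<lambda>y. Pm N y i) has_real_derivative DP y i) (at y)"
    and sig_diff: "\<forall>l x. 1 \<le> l \<and> l \<le> nL N \<longrightarrow> (sig N l has_real_derivative dsg l x) (at x)"
    and ker_cont: "\<forall>l<nL N. \<forall>i<dims N (Suc l). \<forall>j<dims N l.
        continuous_on ({0..T} \<times> {0..T}) (\<lambda>z. ker N l (fst z) (snd z) i j)"
    and ker_diff: "\<forall>l<nL N. \<forall>i<dims N (Suc l). \<forall>j<dims N l. \<forall>t\<in>{0..T}. \<forall>s\<in>{0..T}.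
        ((\<lambda>t. ker N l t s i j) has_real_derivative dker l t s i j) (at t within {0..T})"
    and ker_leibniz: "\<forall>l<nL N. \<forall>i<dims N (Suc l). \<forall>j<dims N l. \<forall>f. continuous_on {0..T} f \<longrightarrow>
        (\<forall>t\<in>{0..T}. ((\<lambda>t. integral {0..T} (\<lambda>s. ker N l t s i j * f s)) has_real_derivative
            integral {0..T} (\<lambda>s. dker l t s i j * f s)) (at t within {0..T}))"
    and bias_diff: "\<forall>l<nL N. \<forall>i<dims N (Suc l). \<forall>t\<in>{0..T}.
        ((\<lambda>t. bias N l t i) has_real_derivative db l t i) (at t within {0..T})"
  shows "l \<le> nL N \<Longrightarrow> \<forall>t\<in>{0..T}. \<forall>j. ((\<lambda>t. vl N T U l t j) has_real_derivative
            (lamv N dsg DP T U l t j * U' t + nu N dsg dker db T U l t j)) (at t within {0..T})"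
proof (induction l)
  case 0
  show ?case
  proof (intro ballI allI)
    fix t j assume t: "t \<in> {0..T}"
    show "((\<lambda>t. vl N T U 0 t j) has_real_derivative
            (lamv N dsg DP T U 0 t j * U' t + nu N dsg dker db T U 0 t j)) (at t within {0..T})"
    proof (cases "j < dims N 0")
      case True
      have "((\<lambda>t. Pm N (U t) j) has_real_derivative DP (U t) j * U' t) (at t within {0..T})"
        by (rule DERIV_chain2[OF _ U_diff[rule_format, OF t]]) (use P_diff True in blast)
      then show ?thesis using True by (simp add: mask_def)
    next
      case False
      then show ?thesis by (simp add: mask_def)
    qed
  qed
next
  case (Suc l)
  then have lL: "l < nL N" by simp
  have IH: "\<forall>t\<in>{0..T}. \<forall>j. ((\<lambda>t. vl N T U l t j) has_real_derivative
            (lamv N dsg DP T U l t j * U' t + nu N dsg dker db T U l t j)) (at t within {0..T})"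
    using Suc by simp
  have vc: "continuous_on {0..T} (\<lambda>t. vl N T U l t j)" for j
    by (rule DERIV_continuous_on) (use IH in blast)
  show ?case
  proof (intro ballI allI)
    fix t i assume t: "t \<in> {0..T}"
    show "((\<lambda>t. vl N T U (Suc l) t i) has_real_derivative
            (lamv N dsg DP T U (Suc l) t i * U' t + nu N dsg dker db T U (Suc l) t i)) (at t within {0..T})"
    proof (cases "i < dims N (Suc l)")
      case False
      then show ?thesis by (simp add: mask_def dg_def dsig_def)
    next
      case True
      note iL = True
      define vd where "vd j = lamv N dsg DP T U l t j * U' t + nu N dsg dker db T U l t j" for j
      have Ieq: "integral {0..T} (\<lambda>s. mv (dims N l) (ker N l \<tau> s) (vl N T U l s) i)
          = (\<Sum>j<dims N l. integral {0..T} (\<lambda>s. ker N l \<tau> s i j * vl N T U l s j))"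
        if "\<tau> \<in> {0..T}" for \<tau>
        unfolding mv_def
        by (rule integral_sum) (auto intro!: integrable_continuous_interval continuous_intros vc
             ker_sec[of T "\<lambda>t s. ker N l t s i _"] that simp: ker_cont[rule_format, OF lL iL])
      have Id0: "((\<lambda>\<tau>. \<Sum>j<dims N l. integral {0..T} (\<lambda>s. ker N l \<tau> s i j * vl N T U l s j))
            has_real_derivative (\<Sum>j<dims N l. integral {0..T} (\<lambda>s. dker l t s i j * vl N T U l s j)))
            (at t within {0..T})"
        by (intro DERIV_sum) (use ker_leibniz lL iL vc t in blast)
      have Id1: "((\<lambda>\<tau>. integral {0..T} (\<lambda>s. mv (dims N l) (ker N l \<tau> s) (vl N T U l s) i))
            has_real_derivative (\<Sum>j<dims N l. integral {0..T} (\<lambda>s. dker l t s i j * vl N T U l s j)))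
            (at t within {0..T})"
        by (rule has_field_derivative_transform_within[OF Id0, of 1]) (use t Ieq in auto)
      have dint: "(\<lambda>s. dker l t s i j * vl N T U l s j) integrable_on {0..T}" if "j < dims N l" for j
        by (rule dker_integrable[OF T_pos t, of "\<lambda>t s. ker N l t s i j"])
           (use ker_cont ker_diff ker_leibniz lL iL that vc in auto)
      have deq: "(\<Sum>j<dims N l. integral {0..T} (\<lambda>s. dker l t s i j * vl N T U l s j))
          = integral {0..T} (\<lambda>s. mv (dims N l) (dker l t s) (vl N T U l s) i)"
        unfolding mv_def by (rule integral_sum[symmetric]) (auto intro: dint)
      have Sd: "((\<lambda>\<tau>. mv (dims N l) (Wm N l) (vl N T U l \<tau>) i) has_real_derivative
             mv (dims N l) (Wm N l) vd i) (at t within {0..T})"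
        unfolding mv_def vd_def by (intro DERIV_sum DERIV_cmult) (use IH t in blast)
      have Pd: "((\<lambda>\<tau>. pre N T U l \<tau> i) has_real_derivative
             mv (dims N l) (Wm N l) vd i + rterm N dker db T U l t i) (at t within {0..T})"
      proof -
        have "((\<lambda>\<tau>. pre N T U l \<tau> i) has_real_derivative
             mv (dims N l) (Wm N l) vd i + integral {0..T} (\<lambda>s. mv (dims N l) (dker l t s) (vl N T U l s) i)
             + db l t i) (at t within {0..T})"
          unfolding pre_def
          by (intro DERIV_add Sd bias_diff[rule_format, OF lL iL t]) (use Id1 deq in simp)
        then show ?thesis unfolding rterm_def by (simp add: add.assoc)
      qed
      have sd: "(sig N (Suc l) has_real_derivative dsg (Suc l) (pre N T U l t i)) (at (pre N T U l t i))"
        using sig_diff Suc.prems by simp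
      have "((\<lambda>\<tau>. sig N (Suc l) (pre N T U l \<tau> i)) has_real_derivative
             dsg (Suc l) (pre N T U l t i) * (mv (dims N l) (Wm N l) vd i + rterm N dker db T U l t i))
             (at t within {0..T})"
        by (rule DERIV_chain2[OF sd Pd])
      moreover have "(\<lambda>\<tau>. vl N T U (Suc l) \<tau> i) = (\<lambda>\<tau>. sig N (Suc l) (pre N T U l \<tau> i))"
        using iL by (simp add: mask_def pre_def)
      moreover have "dsg (Suc l) (pre N T U l t i) * (mv (dims N l) (Wm N l) vd i + rterm N dker db T U l t i)
          = lamv N dsg DP T U (Suc l) t i * U' t + nu N dsg dker db T U (Suc l) t i"
        using iL by (simp add: vd_def mv_def dg_def dsig_def mask_def sum.distrib sum_distrib_right sum_distrib_left
            algebra_simps)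
      ultimately show ?thesis by simp
    qed
  qed
qed



lemma mv_dg_add: "mv n A (dg s (\<lambda>k. x k + y k)) = (\<lambda>k. mv n A (dg s x) k + mv n A (dg s y) k)"
  by (auto simp: mv_def dg_def fun_eq_iff sum.distrib algebra_simps)

lemma mv_dg_zero: "mv n A (dg s (\<lambda>k. 0)) = (\<lambda>k. 0)"
  by (auto simp: mv_def dg_def fun_eq_iff)

lemma chain_add: "chain N dsg T U t i (\<lambda>k. x k + y k) = (\<lambda>k. chain N dsg T U t i x k + chain N dsg T U t i y k)"
proof (induction i arbitrary: x y)
  case 0 then show ?case by simp
next
  case (Suc i) then show ?case by (simp add: mv_dg_add)
qed

lemma chain_zero: "chain N dsg T U t i (\<lambda>k. 0) = (\<lambda>k. 0)"
  by (induction i) (simp_all add: mv_dg_zero)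

lemma nu_unroll:
  "Suc m \<le> nL N \<Longrightarrow> nu N dsg dker db T U (nL N) t = dg (dsig N dsg T U (nL N) t)
     (\<lambda>k. (\<Sum>i<Suc m. chain N dsg T U t i (rterm N dker db T U (nL N - 1 - i) t) k)
        + chain N dsg T U t m (mv (dims N (nL N - Suc m)) (Wm N (nL N - Suc m)) (nu N dsg dker db T U (nL N - Suc m) t)) k)"
proof (induction m)
  case 0
  then obtain l where l: "nL N = Suc l" by (cases "nL N") auto
  show ?case by (simp add: l add.commute)
next
  case (Suc m)
  define l' where "l' = nL N - Suc (Suc m)"
  have e1: "nL N - Suc m = Suc l'" using Suc.prems unfolding l'_def by simp
  have e2: "nL N - 1 - Suc m = l'" unfolding l'_def by simp
  have IH: "nu N dsg dker db T U (nL N) t = dg (dsig N dsg T U (nL N) t)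
     (\<lambda>k. (\<Sum>i<Suc m. chain N dsg T U t i (rterm N dker db T U (nL N - 1 - i) t) k)
        + chain N dsg T U t m (mv (dims N (nL N - Suc m)) (Wm N (nL N - Suc m)) (nu N dsg dker db T U (nL N - Suc m) t)) k)"
    using Suc by simp
  have "chain N dsg T U t m (mv (dims N (nL N - Suc m)) (Wm N (nL N - Suc m)) (nu N dsg dker db T U (nL N - Suc m) t))
      = chain N dsg T U t (Suc m) (\<lambda>i. mv (dims N l') (Wm N l') (nu N dsg dker db T U l' t) i + rterm N dker db T U l' t i)"
    by (simp add: e1 l'_def[symmetric])
  also have "\<dots> = (\<lambda>k. chain N dsg T U t (Suc m) (mv (dims N l') (Wm N l') (nu N dsg dker db T U l' t)) k
       + chain N dsg T U t (Suc m) (rterm N dker db T U l' t) k)"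
    by (rule chain_add)
  finally show ?case unfolding IH
    by (simp add: e2 l'_def algebra_simps)
qed

lemma nu_top: "nu N dsg dker db T U (nL N) t = dg (dsig N dsg T U (nL N) t)
     (\<lambda>k. \<Sum>i<nL N. chain N dsg T U t i (rterm N dker db T U (nL N - 1 - i) t) k)"
proof (cases "nL N")
  case 0 then show ?thesis by (simp add: dg_def)
next
  case (Suc m)
  have "nu N dsg dker db T U (nL N) t = dg (dsig N dsg T U (nL N) t)
     (\<lambda>k. (\<Sum>i<Suc m. chain N dsg T U t i (rterm N dker db T U (nL N - 1 - i) t) k)
        + chain N dsg T U t m (mv (dims N (nL N - Suc m)) (Wm N (nL N - Suc m)) (nu N dsg dker db T U (nL N - Suc m) t)) k)"
    by (rule nu_unroll) (simp add: Suc)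
  also have "mv (dims N (nL N - Suc m)) (Wm N (nL N - Suc m)) (nu N dsg dker db T U (nL N - Suc m) t) = (\<lambda>k. 0)"
    by (simp add: Suc mv_def)
  finally show ?thesis by (simp add: Suc chain_zero)
qed


theorem theorem2:
  fixes N :: nop and T \<alpha> :: real and U U' Y :: "real \<Rightarrow> real"
    and u :: "real^'n \<Rightarrow> real \<Rightarrow> real"
    and DP :: "real \<Rightarrow> nat \<Rightarrow> real" and DQ :: "(nat \<Rightarrow> real) \<Rightarrow> nat \<Rightarrow> real"
    and dsg :: "nat \<Rightarrow> real \<Rightarrow> real"
    and dker :: "nat \<Rightarrow> real \<Rightarrow> real \<Rightarrow> nat \<Rightarrow> nat \<Rightarrow> real"
    and db :: "nat \<Rightarrow> real \<Rightarrow> nat \<Rightarrow> real"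
    and phi phit phiy :: "real \<Rightarrow> real \<Rightarrow> real"
  assumes T_pos: "T > 0" and alpha_pos: "\<alpha> > 0"
    and bc_input: "\<forall>t\<in>{0..T}. u (\<chi> i. 1) t = U t"
    and init: "\<forall>x. (\<forall>i. 0 \<le> x $ i \<and> x $ i \<le> 1) \<longrightarrow> u x 0 = U 0"
    and bc_output: "\<forall>t\<in>{0..T}. Y t = u 0 t"
    and exact: "\<forall>t\<in>{0..T}. Y t = Gop N T U t"
    and U_diff: "\<forall>t\<in>{0..T}. (U has_real_derivative U' t) (at t within {0..T})"
    and P_diff: "\<forall>y i. i < dims N 0 \<longrightarrow> ((\<lambda>y. Pm N y i) has_real_derivative DP y i) (at y)"
    and Q_diff: "\<forall>x. (\<forall>i\<ge>dims N (nL N). x i = 0) \<longrightarrow> has_grad (dims N (nL N)) (Qm N) x (DQ x)"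
    and sig_diff: "\<forall>l x. 1 \<le> l \<and> l \<le> nL N \<longrightarrow> (sig N l has_real_derivative dsg l x) (at x)"
    and ker_cont: "\<forall>l<nL N. \<forall>i<dims N (Suc l). \<forall>j<dims N l.
        continuous_on ({0..T} \<times> {0..T}) (\<lambda>z. ker N l (fst z) (snd z) i j)"
    and ker_diff: "\<forall>l<nL N. \<forall>i<dims N (Suc l). \<forall>j<dims N l. \<forall>t\<in>{0..T}. \<forall>s\<in>{0..T}.
        ((\<lambda>t. ker N l t s i j) has_real_derivative dker l t s i j) (at t within {0..T})"
    and ker_leibniz: "\<forall>l<nL N. \<forall>i<dims N (Suc l). \<forall>j<dims N l. \<forall>f. continuous_on {0..T} f \<longrightarrow>
        (\<forall>t\<in>{0..T}. ((\<lambda>t. integral {0..T} (\<lambda>s. ker N l t s i j * f s)) has_real_derivative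
            integral {0..T} (\<lambda>s. dker l t s i j * f s)) (at t within {0..T}))"
    and bias_diff: "\<forall>l<nL N. \<forall>i<dims N (Suc l). \<forall>t\<in>{0..T}.
        ((\<lambda>t. bias N l t i) has_real_derivative db l t i) (at t within {0..T})"
    and phi_diff: "\<forall>t\<in>{0..T}. \<forall>y. ((\<lambda>z. phi (fst z) (snd z)) has_derivative
        (\<lambda>h. phit t y * fst h + phiy t y * snd h)) (at (t, y) within {0..T} \<times> UNIV)"
    and phit_cont: "continuous_on ({0..T} \<times> UNIV) (\<lambda>z. phit (fst z) (snd z))"
    and phiy_cont: "continuous_on ({0..T} \<times> UNIV) (\<lambda>z. phiy (fst z) (snd z))"
  shows "(\<forall>t\<in>{0..T}. (Gop N T U has_real_derivative
            (Lambda N dsg DP DQ T U t * U' t + Mu N dsg DQ dker db T U t)) (at t within {0..T}))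
      \<and> ((\<forall>t\<in>{0..T}.
            phiy t (Gop N T U t) * vector_derivative (Gop N T U) (at t within {0..T})
            + phit t (Gop N T U t) + \<alpha> * phi t (Gop N T U t)
            + \<alpha> / (exp (\<alpha> * T) - 1) * phi 0 (U 0) \<le> 0)
         \<longrightarrow> (\<exists>t0\<in>{0..T}. \<forall>t\<in>{t0..T}. phi t (Y t) \<le> 0))"
  proof -
  have vl_mask: "vl N T U l y j = 0" if "j \<ge> dims N l" for l y j
    using that by (cases l) (simp_all add: mask_def)
  have LD: "\<forall>t\<in>{0..T}. \<forall>j. ((\<lambda>t. vl N T U (nL N) t j) has_real_derivative
            (lamv N dsg DP T U (nL N) t j * U' t + nu N dsg dker db T U (nL N) t j)) (at t within {0..T})"
    by (rule layer_deriv[OF T_pos U_diff P_diff sig_diff ker_cont ker_diff ker_leibniz bias_diff]) simp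
  have GD: "(Gop N T U has_real_derivative
            (Lambda N dsg DP DQ T U t * U' t + Mu N dsg DQ dker db T U t)) (at t within {0..T})"
    if t: "t \<in> {0..T}" for t
  proof -
    have gr: "has_grad (dims N (nL N)) (Qm N) (vl N T U (nL N) t) (DQ (vl N T U (nL N) t))"
      using Q_diff vl_mask by blast
    have "((\<lambda>y. Qm N (vl N T U (nL N) y)) has_real_derivative
        (\<Sum>j<dims N (nL N). DQ (vl N T U (nL N) t) j *
            (lamv N dsg DP T U (nL N) t j * U' t + nu N dsg dker db T U (nL N) t j))) (at t within {0..T})"
      by (rule chain_grad[where v="vl N T U (nL N)" and Q="Qm N" and n="dims N (nL N)"
            and v'="\<lambda>j. lamv N dsg DP T U (nL N) t j * U' t + nu N dsg dker db T U (nL N) t j", OF _ _ gr])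
         (use LD t vl_mask in auto)
    moreover have "(\<Sum>j<dims N (nL N). DQ (vl N T U (nL N) t) j *
            (lamv N dsg DP T U (nL N) t j * U' t + nu N dsg dker db T U (nL N) t j))
        = Lambda N dsg DP DQ T U t * U' t + Mu N dsg DQ dker db T U t"
      unfolding Lambda_def Mu_def Let_def nu_top
      by (simp add: sum.distrib sum_distrib_right sum_distrib_left distrib_left algebra_simps)
    ultimately show ?thesis unfolding Gop_def[abs_def] by simp
  qed
  have partB: "(\<forall>t\<in>{0..T}.
            phiy t (Gop N T U t) * vector_derivative (Gop N T U) (at t within {0..T})
            + phit t (Gop N T U t) + \<alpha> * phi t (Gop N T U t)
            + \<alpha> / (exp (\<alpha> * T) - 1) * phi 0 (U 0) \<le> 0)
         \<longrightarrow> (\<exists>t0\<in>{0..T}. \<forall>t\<in>{t0..T}. phi t (Y t) \<le> 0)"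
  proof
    assume H: "\<forall>t\<in>{0..T}.
            phiy t (Gop N T U t) * vector_derivative (Gop N T U) (at t within {0..T})
            + phit t (Gop N T U t) + \<alpha> * phi t (Gop N T U t)
            + \<alpha> / (exp (\<alpha> * T) - 1) * phi 0 (U 0) \<le> 0"
    have T0: "0 \<in> {0..T}" "T \<in> {0..T}" using T_pos by auto
    have U0: "U 0 = Gop N T U 0"
    proof -
      have "u 0 0 = U 0" using init by simp
      then show ?thesis using bc_output exact T0 by metis
    qed
    have vd: "vector_derivative (Gop N T U) (at t within {0..T})
        = Lambda N dsg DP DQ T U t * U' t + Mu N dsg DQ dker db T U t" if t: "t \<in> {0..T}" for t
    proof -
      have "(Gop N T U has_vector_derivative (Lambda N dsg DP DQ T U t * U' t + Mu N dsg DQ dker db T U t))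
          (at t within cbox 0 T)"
        using GD[OF t] by (simp add: has_real_derivative_iff_has_vector_derivative cbox_interval)
      then show ?thesis
        using vector_derivative_within_cbox[OF T_pos, of t] t by (simp add: cbox_interval)
    qed
    have "phi T (Gop N T U T) \<le> 0"
    proof (rule partb[where G="Gop N T U" and
        G'="\<lambda>t. Lambda N dsg DP DQ T U t * U' t + Mu N dsg DQ dker db T U t", OF T_pos alpha_pos _ phi_diff])
      show "\<forall>t\<in>{0..T}. (Gop N T U has_real_derivative
          (Lambda N dsg DP DQ T U t * U' t + Mu N dsg DQ dker db T U t)) (at t within {0..T})"
        using GD by blast
      show "\<forall>t\<in>{0..T}. phiy t (Gop N T U t) * (Lambda N dsg DP DQ T U t * U' t + Mu N dsg DQ dker db T U t)
          + phit t (Gop N T U t) + \<alpha> * phi t (Gop N T U t)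
          + \<alpha> / (exp (\<alpha> * T) - 1) * phi 0 (Gop N T U 0) \<le> 0"
        using H vd U0 by simp
    qed
    then have "\<forall>t\<in>{T..T}. phi t (Y t) \<le> 0" using exact T0 by simp
    then show "\<exists>t0\<in>{0..T}. \<forall>t\<in>{t0..T}. phi t (Y t) \<le> 0" using T0 by blast
  qed
  show ?thesis using GD partB by blast
qed

end
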